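(* There is an absolute constant $c>0$ such that for all integers $n,n_1,n_2,n_3$ with $n=n_1+n_2+n_3$ and $\tilde m_1(n,n_1,n_2,n_3)\neq0$ one has $$|\Phi|\ge \begin{cases} c\,|n_1+n_2|\,|n_2+n_3| & \text{if } |n_2|\ge |n_3|,\\ c\,|n_1+n_3|\,|n_2+n_3| &\text{if } |n_2|<|n_3|,\end{cases}$$ where $\Phi=n|n|-n_1|n_1|-n_2|n_2|-n_3|n_3|$. In particular $\Phi\ne0$ whenever $\tilde m_1\neq 0$.
   Context: Write $n_{ij\ldots}=n_i+n_j+\cdots$ and $\hat n:=n-i\mathbf 1_{\{n=0\}}$. For integers with $n=n_{123}$, $m_1(n,n_1,n_2,n_3):=2i\frac{n\,n_{23}}{\hat n_1\hat n_2}\mathbf 1_{\{n>0\}}\mathbf 1_{\{n_{23}<0\}}\mathbf 1_{\{n_3\neq0\}}$ and $\tilde m_1:=m_1\mathbf 1_{\{n_{12}n_{13}\neq0\}}$. *)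

theory Defs
  imports Complex_Main
begin

definition ind :: "bool \<Rightarrow> complex" where
  "ind b = (if b then 1 else 0)"

definition nhat :: "int \<Rightarrow> complex" where
  "nhat k = of_int k - \<i> * ind (k = 0)"

definition m1 :: "int \<Rightarrow> int \<Rightarrow> int \<Rightarrow> int \<Rightarrow> complex" where
  "m1 n n1 n2 n3 = 2 * \<i> * (of_int n * of_int (n2 + n3)) / (nhat n1 * nhat n2)
      * ind (n > 0) * ind (n2 + n3 < 0) * ind (n3 \<noteq> 0)"

definition m1_tilde :: "int \<Rightarrow> int \<Rightarrow> int \<Rightarrow> int \<Rightarrow> complex" where
  "m1_tilde n n1 n2 n3 = m1 n n1 n2 n3 * ind ((n1 + n2) * (n1 + n3) \<noteq> 0)"

definition Phi :: "int \<Rightarrow> int \<Rightarrow> int \<Rightarrow> int \<Rightarrow> int" where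
  "Phi n n1 n2 n3 = n * \<bar>n\<bar> - n1 * \<bar>n1\<bar> - n2 * \<bar>n2\<bar> - n3 * \<bar>n3\<bar>"

end

theory Submission
  imports Defs
begin

lemma key:
  fixes n n1 n2 n3 :: int
  assumes e: "n = n1+n2+n3" and h: "n>0" "n2+n3<0" "n3\<noteq>0" "n1+n2\<noteq>0" "n1+n3\<noteq>0"
  shows "\<bar>Phi n n1 n2 n3\<bar> \<ge> (if \<bar>n2\<bar> \<ge> \<bar>n3\<bar> then \<bar>n1+n2\<bar>*\<bar>n2+n3\<bar> else \<bar>n1+n3\<bar>*\<bar>n2+n3\<bar>) \<and> Phi n n1 n2 n3 \<noteq> 0"
proof -
  have a: "n1 > 0" using e h by linarith
  consider "n2 < 0" "n3 < 0" | "n2 \<ge> 0" "n3 < 0" | "n2 < 0" "n3 > 0" using h by linarith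
  then show ?thesis
  proof cases
    case 1
    define p where "p = -n2" define q where "q = -n3"
    have pq: "p \<ge> 0" "q > 0" using 1 p_def q_def by auto
    have P0: "Phi n n1 n2 n3 = n*n - n1*n1 + n2*n2 + n3*n3"
      using 1 h a unfolding Phi_def by simp
    have P: "Phi n n1 n2 n3 = -2*((p+q)*n + p*q)"
      unfolding P0 p_def q_def by (subst e)+ algebra
    have pos: "(p+q)*n \<ge> 0" "p*q \<ge> 0" using pq h by auto
    have qpos: "(p+q)*n > 0" using pq h by auto
    show ?thesis
    proof (cases "\<bar>n2\<bar> \<ge> \<bar>n3\<bar>")
      case True
      hence "q \<le> p" using 1 p_def q_def by auto
      hence "q*(p+q) \<le> 2*(p*q)" using pq by (simp add: algebra_simps mult_right_mono)
      moreover have "\<bar>n1+n2\<bar> = n+q" "\<bar>n2+n3\<bar> = p+q" using 1 e h p_def q_def by auto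
      ultimately show ?thesis using True P pos qpos by (simp add: algebra_simps)
    next
      case False
      hence "p < q" using 1 p_def q_def by auto
      hence "p*(p+q) \<le> 2*(p*q)" using pq by (simp add: algebra_simps mult_left_mono)
      moreover have "\<bar>n1+n3\<bar> = n+p" "\<bar>n2+n3\<bar> = p+q" using e h p_def q_def pq by auto
      ultimately show ?thesis using False P pos qpos by (simp add: algebra_simps)
    qed
  next
    case 2
    define p where "p = n2" define q where "q = -n3"
    have P0: "Phi n n1 n2 n3 = n*n - n1*n1 - n2*n2 + n3*n3"
      using 2 h a unfolding Phi_def by simp
    have P: "Phi n n1 n2 n3 = -2*((q-p)*(n1+n3))"
      unfolding P0 p_def q_def by (subst e)+ algebra
    have nb: "\<not> \<bar>n2\<bar> \<ge> \<bar>n3\<bar>" using 2 h by auto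
    have "\<bar>Phi n n1 n2 n3\<bar> = 2*(\<bar>n1+n3\<bar>*\<bar>n2+n3\<bar>)" using P p_def q_def h 2
      by (simp add: abs_mult)
    moreover have "\<bar>n1+n3\<bar>*\<bar>n2+n3\<bar> > 0" using h by auto
    ultimately show ?thesis using nb by auto
  next
    case 3
    have P0: "Phi n n1 n2 n3 = n*n - n1*n1 + n2*n2 - n3*n3"
      using 3 h a unfolding Phi_def by simp
    have P: "Phi n n1 n2 n3 = 2*((n2+n3)*(n1+n2))"
      unfolding P0 by (subst e)+ algebra
    have nb: "\<bar>n2\<bar> \<ge> \<bar>n3\<bar>" using 3 h by auto
    have "\<bar>Phi n n1 n2 n3\<bar> = 2*(\<bar>n1+n2\<bar>*\<bar>n2+n3\<bar>)" using P by (simp add: abs_mult)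
    moreover have "\<bar>n1+n2\<bar>*\<bar>n2+n3\<bar> > 0" using h by auto
    ultimately show ?thesis using nb by auto
  qed
qed

lemma ind0: "ind b \<noteq> 0 \<Longrightarrow> b" by (cases b) (auto simp: ind_def)

theorem mainTheorem4:
  shows "\<exists>c::real. c > 0 \<and>
    (\<forall>n n1 n2 n3 :: int. n = n1 + n2 + n3 \<and> m1_tilde n n1 n2 n3 \<noteq> 0 \<longrightarrow>
       \<bar>real_of_int (Phi n n1 n2 n3)\<bar> \<ge>
         (if \<bar>n2\<bar> \<ge> \<bar>n3\<bar> then c * \<bar>real_of_int (n1 + n2)\<bar> * \<bar>real_of_int (n2 + n3)\<bar>
          else c * \<bar>real_of_int (n1 + n3)\<bar> * \<bar>real_of_int (n2 + n3)\<bar>)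
       \<and> Phi n n1 n2 n3 \<noteq> 0)"
proof (intro exI[of _ 1] conjI allI impI)
  fix n n1 n2 n3 :: int
  assume A: "n = n1 + n2 + n3 \<and> m1_tilde n n1 n2 n3 \<noteq> 0"
  hence M: "m1_tilde n n1 n2 n3 \<noteq> 0" by blast
  have h: "n>0" "n2+n3<0" "n3\<noteq>0" "(n1+n2)*(n1+n3)\<noteq>0"
    using M unfolding m1_tilde_def m1_def by (auto dest: ind0)
  have K: "\<bar>Phi n n1 n2 n3\<bar> \<ge> (if \<bar>n2\<bar> \<ge> \<bar>n3\<bar> then \<bar>n1+n2\<bar>*\<bar>n2+n3\<bar> else \<bar>n1+n3\<bar>*\<bar>n2+n3\<bar>) \<and> Phi n n1 n2 n3 \<noteq> 0"
    using key[of n n1 n2 n3] A h by auto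
  show "Phi n n1 n2 n3 \<noteq> 0" using K by simp
  show "\<bar>real_of_int (Phi n n1 n2 n3)\<bar> \<ge>
         (if \<bar>n2\<bar> \<ge> \<bar>n3\<bar> then 1 * \<bar>real_of_int (n1 + n2)\<bar> * \<bar>real_of_int (n2 + n3)\<bar>
          else 1 * \<bar>real_of_int (n1 + n3)\<bar> * \<bar>real_of_int (n2 + n3)\<bar>)"
  proof (cases "\<bar>n2\<bar> \<ge> \<bar>n3\<bar>")
    case True
    then have "\<bar>n1+n2\<bar>*\<bar>n2+n3\<bar> \<le> \<bar>Phi n n1 n2 n3\<bar>" using K by simp
    hence "real_of_int (\<bar>n1+n2\<bar>*\<bar>n2+n3\<bar>) \<le> real_of_int \<bar>Phi n n1 n2 n3\<bar>" by linarith
    then show ?thesis using True by simp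
  next
    case False
    then have "\<bar>n1+n3\<bar>*\<bar>n2+n3\<bar> \<le> \<bar>Phi n n1 n2 n3\<bar>" using K by simp
    hence "real_of_int (\<bar>n1+n3\<bar>*\<bar>n2+n3\<bar>) \<le> real_of_int \<bar>Phi n n1 n2 n3\<bar>" by linarith
    then show ?thesis using False by simp
  qed
qed simp

end
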